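(* Let $X(t)$, $t\in\mathbb{R}$, be a zero-mean stationary Gaussian process whose covariance function $r(t)=\operatorname{Cov}(X(s),X(s+t))$ is twice continuously differentiable with $r''(0)<0$. Let $X_0$ be its Slepian model at level zero, $$X_0(t)=-R\,\frac{r'(t)}{\sqrt{-r''(0)}}+\Delta(t),\qquad t\ge 0,$$ where $R$ is a standard Rayleigh random variable (density $se^{-s^2/2}$, $s>0$) independent of a zero-mean Gaussian process $\Delta$ with covariance $r_\Delta(t,s)=r(t-s)-\frac{r(t)r(s)}{r(0)}+\frac{r'(t)r'(s)}{r''(0)}$. Let $E_0(t)=\mathbb{E}\,\operatorname{sgn}(X_0(t))$. Then for every $t>0$ with $|r(t)|<r(0)$, $$E_0(t)=-\sqrt{\frac{r(0)}{-r''(0)}}\;\frac{r'(t)}{\sqrt{r(0)^2-r(t)^2}}.$$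
   Context: $\operatorname{sgn}(x)=1$ for $x>0$ and $-1$ for $x\le 0$ (the sign at $0$ is irrelevant since $X_0(t)=0$ with probability zero at the considered $t$). $X_0$ describes the behaviour of $X$ seen from a zero upcrossing instant. *)

theory Defs
  imports "HOL-Probability.Probability"
begin

text \<open>Sign convention of the paper: sgn x = 1 for x > 0 and -1 for x \<le> 0.\<close>
definition sgn0 :: "real \<Rightarrow> real" where
  "sgn0 x = (if x > 0 then 1 else -1)"

text \<open>A real random variable is Gaussian if it is normally distributed with positive
  variance or almost surely constant (degenerate Gaussian).\<close>
definition gaussian_rv :: "'a measure \<Rightarrow> ('a \<Rightarrow> real) \<Rightarrow> bool" where
  "gaussian_rv M Y \<longleftrightarrow> Y \<in> borel_measurable M \<and>
     ((\<exists>\<mu> \<sigma>. \<sigma> > 0 \<and> distributed M lborel Y (normal_density \<mu> \<sigma>)) \<or>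
      (\<exists>c. AE \<omega> in M. Y \<omega> = c))"

definition gaussian_process :: "'a measure \<Rightarrow> real set \<Rightarrow> (real \<Rightarrow> 'a \<Rightarrow> real) \<Rightarrow> bool" where
  "gaussian_process M I X \<longleftrightarrow>
     (\<forall>t\<in>I. X t \<in> borel_measurable M) \<and>
     (\<forall>S c. finite S \<longrightarrow> S \<subseteq> I \<longrightarrow> gaussian_rv M (\<lambda>\<omega>. \<Sum>t\<in>S. c t * X t \<omega>))"

definition rayleigh_density :: "real \<Rightarrow> ennreal" where
  "rayleigh_density s = ennreal (if s > 0 then s * exp (- (s^2) / 2) else 0)"

end

theory Submission
  imports Defs "HOL-Real_Asymp.Real_Asymp"
begin



definition rho :: "real \<Rightarrow> real" where
  "rho s = (if s > 0 then s * exp (- (s^2) / 2) else 0)"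

lemma sgn0_meas[measurable]: "sgn0 \<in> borel_measurable borel"
proof -
  have eq: "sgn0 = (\<lambda>x. if x > 0 then 1 else -1)" by (rule ext) (simp add: sgn0_def)
  show ?thesis unfolding eq by measurable
qed

lemma rho_nonneg: "0 \<le> rho s" unfolding rho_def by auto

lemma rho_meas[measurable]: "rho \<in> borel_measurable borel"
  unfolding rho_def by measurable

lemma rho_tail:
  fixes c :: real
  shows "has_bochner_integral lborel (\<lambda>s. rho s * indicator {c..} s) (exp (- ((max c 0)^2) / 2))"
proof -
  define c' where "c' = max c 0"
  have eq: "rho s * indicator {c..} s = s * exp (- (s^2) / 2) * indicator {c'..} s" for s
    unfolding rho_def c'_def by (auto simp: indicator_def)
  have "(\<integral>\<^sup>+s. ennreal (s * exp (- (s^2) / 2)) * indicator {c'..} s \<partial>lborel) = ennreal (0 - (- exp (- (c'^2) / 2)))"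
  proof (rule nn_integral_FTC_atLeast)
    show "(\<lambda>s::real. s * exp (- (s^2) / 2)) \<in> borel_measurable borel" by measurable
    fix x assume "c' \<le> x"
    show "DERIV (\<lambda>s. - exp (- (s^2) / 2)) x :> x * exp (- (x^2) / 2)"
      by (auto intro!: derivative_eq_intros)
    show "0 \<le> x * exp (- (x^2) / 2)" using \<open>c' \<le> x\<close> unfolding c'_def by auto
  next
    show "((\<lambda>s::real. - exp (- (s^2) / 2)) \<longlongrightarrow> 0) at_top"
      by real_asymp
  qed
  then have "(\<integral>\<^sup>+s. ennreal (rho s * indicator {c..} s) \<partial>lborel) = ennreal (exp (- (c'^2) / 2))"
    by (simp add: eq indicator_mult_ennreal mult.commute)
  then show ?thesis unfolding c'_def
    by (intro has_bochner_integral_nn_integral) (auto simp: rho_nonneg)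
qed


lemma rho_int: "has_bochner_integral lborel rho 1"
proof -
  have "has_bochner_integral lborel (\<lambda>s. rho s * indicator {0..} s) 1"
    using rho_tail[of 0] by simp
  moreover have "rho s * indicator {0..} s = rho s" for s
    unfolding rho_def by (auto simp: indicator_def)
  ultimately show ?thesis by simp
qed

lemma rho_tail_open:
  fixes c :: real
  shows "has_bochner_integral lborel (\<lambda>s. rho s * indicator {c<..} s) (exp (- ((max c 0)^2) / 2))"
proof -
  have "AE s in lborel. rho s * indicator {c..} s = rho s * indicator {c<..} s"
    using AE_lborel_singleton[of c] by eventually_elim (auto simp: indicator_def)
  then show ?thesis using rho_tail[of c]
    by (subst (asm) has_bochner_integral_cong_AE) auto
qed

lemma inner:
  fixes a d :: real
  assumes "a \<noteq> 0"
  shows "has_bochner_integral lborel (\<lambda>s. rho s * sgn0 (d - a * s))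
     ((if a > 0 then 1 else -1) * (1 - 2 * exp (- ((max (d/a) 0)^2) / 2)))"
proof (cases "a > 0")
  case True
  have eq: "rho s * sgn0 (d - a * s) = rho s - 2 * (rho s * indicator {d/a..} s)" for s
  proof -
    have "d - a * s > 0 \<longleftrightarrow> s < d / a" using True by (simp add: field_simps)
    then show ?thesis unfolding sgn0_def by (auto simp: indicator_def)
  qed
  have "has_bochner_integral lborel (\<lambda>s. rho s - 2 * (rho s * indicator {d/a..} s))
      (1 - 2 * exp (- ((max (d/a) 0)^2) / 2))"
    by (intro has_bochner_integral_diff has_bochner_integral_mult_right rho_int rho_tail)
  then show ?thesis using True by (simp only: eq) simp
next
  case False
  with assms have neg: "a < 0" by auto
  have eq: "rho s * sgn0 (d - a * s) = 2 * (rho s * indicator {d/a<..} s) - rho s" for s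
  proof -
    have "d - a * s > 0 \<longleftrightarrow> s > d / a" using neg by (simp add: field_simps)
    then show ?thesis unfolding sgn0_def by (auto simp: indicator_def)
  qed
  have "has_bochner_integral lborel (\<lambda>s. 2 * (rho s * indicator {d/a<..} s) - rho s)
      (2 * exp (- ((max (d/a) 0)^2) / 2) - 1)"
    by (intro has_bochner_integral_diff has_bochner_integral_mult_right rho_int rho_tail_open)
  then show ?thesis using neg by (simp only: eq) (simp add: algebra_simps)
qed

lemma half_gauss:
  fixes k :: real
  assumes k: "k > 0"
  shows "has_bochner_integral lborel (\<lambda>x. indicator {0..} x * exp (- k * x^2)) (sqrt pi / (2 * sqrt k))"
    and "has_bochner_integral lborel (\<lambda>x. indicator {..0} x * exp (- k * x^2)) (sqrt pi / (2 * sqrt k))"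
proof -
  have sk: "sqrt k > 0" using k by simp
  have g: "has_bochner_integral lborel (\<lambda>x::real. indicator {0..} x *\<^sub>R exp (- x\<^sup>2)) (sqrt pi / 2)"
    by (rule gaussian_moment_0)
  have 1: "has_bochner_integral lborel (\<lambda>x. indicator {0..} (0 + sqrt k * x) *\<^sub>R exp (- (0 + sqrt k * x)\<^sup>2)) ((sqrt pi / 2) /\<^sub>R \<bar>sqrt k\<bar>)"
    using g lborel_has_bochner_integral_real_affine_iff[of "sqrt k" _ "sqrt pi / 2" 0] sk by simp
  have 2: "has_bochner_integral lborel (\<lambda>x. indicator {0..} (0 + (- sqrt k) * x) *\<^sub>R exp (- (0 + (- sqrt k) * x)\<^sup>2)) ((sqrt pi / 2) /\<^sub>R \<bar>- sqrt k\<bar>)"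
    using g lborel_has_bochner_integral_real_affine_iff[of "- sqrt k" _ "sqrt pi / 2" 0] sk by simp
  have e1: "indicator {0..} (0 + sqrt k * x) *\<^sub>R exp (- (0 + sqrt k * x)\<^sup>2) = indicator {0..} x * exp (- k * x^2)" for x
    using sk k by (auto simp: indicator_def power_mult_distrib zero_le_mult_iff)
  have e2: "indicator {0..} (0 + (- sqrt k) * x) *\<^sub>R exp (- (0 + (- sqrt k) * x)\<^sup>2) = indicator {..0} x * exp (- k * x^2)" for x
    using sk k by (auto simp: indicator_def power_mult_distrib zero_le_mult_iff mult_le_0_iff)
  show "has_bochner_integral lborel (\<lambda>x. indicator {0..} x * exp (- k * x^2)) (sqrt pi / (2 * sqrt k))"
    using 1 sk unfolding e1 by (simp add: field_simps)
  show "has_bochner_integral lborel (\<lambda>x. indicator {..0} x * exp (- k * x^2)) (sqrt pi / (2 * sqrt k))"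
    using 2 sk unfolding e2 by (simp add: field_simps)
qed


lemma normal_density_alt:
  assumes "\<sigma> > 0"
  shows "normal_density 0 \<sigma> d = 1 / sqrt (2 * pi * \<sigma>\<^sup>2) * exp (- (1 / (2 * \<sigma>\<^sup>2)) * d^2)"
  unfolding normal_density_def by (simp add: field_simps)

lemma outer0:
  fixes \<sigma> :: real
  assumes s: "\<sigma> > 0"
  shows "has_bochner_integral lborel (\<lambda>d. normal_density 0 \<sigma> d * sgn0 d) 0"
proof -
  define C where "C = 1 / sqrt (2 * pi * \<sigma>\<^sup>2)"
  define k1 where "k1 = 1 / (2 * \<sigma>\<^sup>2)"
  have k1: "k1 > 0" using s unfolding k1_def by simp
  have "has_bochner_integral lborel (\<lambda>d. C * (indicator {0..} d * exp (- k1 * d^2) - indicator {..0} d * exp (- k1 * d^2)))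
     (C * (sqrt pi / (2 * sqrt k1) - sqrt pi / (2 * sqrt k1)))"
    by (intro has_bochner_integral_mult_right has_bochner_integral_diff half_gauss k1)
  moreover have "AE d in lborel. C * (indicator {0..} d * exp (- k1 * d^2) - indicator {..0} d * exp (- k1 * d^2))
      = normal_density 0 \<sigma> d * sgn0 d"
    using AE_lborel_singleton[of 0]
    by eventually_elim (auto simp: normal_density_alt[OF s] C_def k1_def sgn0_def indicator_def)
  ultimately show ?thesis
    by (subst (asm) has_bochner_integral_cong_AE) auto
qed

lemma outer:
  fixes \<sigma> a :: real
  assumes s: "\<sigma> > 0" and a: "a \<noteq> 0"
  shows "has_bochner_integral lborel
     (\<lambda>d. normal_density 0 \<sigma> d * ((if a > 0 then 1 else -1) * (1 - 2 * exp (- ((max (d/a) 0)^2) / 2))))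
     (- a / sqrt (a^2 + \<sigma>^2))"
proof -
  define C where "C = 1 / sqrt (2 * pi * \<sigma>\<^sup>2)"
  define k1 where "k1 = 1 / (2 * \<sigma>\<^sup>2)"
  define k2 where "k2 = 1 / (2 * \<sigma>\<^sup>2) + 1 / (2 * a^2)"
  define sg :: real where "sg = (if a > 0 then 1 else -1)"
  have k1: "k1 > 0" using s unfolding k1_def by simp
  have k2: "k2 > 0" using s a unfolding k2_def by (simp add: add_pos_pos)
  define P :: "real set" where "P = (if a > 0 then {..0} else {0..})"
  define Q :: "real set" where "Q = (if a > 0 then {0..} else {..0})"
  have hP: "has_bochner_integral lborel (\<lambda>d. indicator P d * exp (- k1 * d^2)) (sqrt pi / (2 * sqrt k1))"
    unfolding P_def using half_gauss[OF k1] by auto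
  have hQ: "has_bochner_integral lborel (\<lambda>d. indicator Q d * exp (- k2 * d^2)) (sqrt pi / (2 * sqrt k2))"
    unfolding Q_def using half_gauss[OF k2] by auto
  have h1: "has_bochner_integral lborel
     (\<lambda>d. sg * (normal_density 0 \<sigma> d - 2 * (C * (indicator P d * exp (- k1 * d^2) + indicator Q d * exp (- k2 * d^2)))))
     (sg * (1 - 2 * (C * (sqrt pi / (2 * sqrt k1) + sqrt pi / (2 * sqrt k2)))))"
    by (intro has_bochner_integral_mult_right has_bochner_integral_diff has_bochner_integral_add hP hQ)
       (auto simp: has_bochner_integral_iff s)
  moreover have hAE: "AE d in lborel. sg * (normal_density 0 \<sigma> d - 2 * (C * (indicator P d * exp (- k1 * d^2) + indicator Q d * exp (- k2 * d^2))))
     = normal_density 0 \<sigma> d * ((if a > 0 then 1 else -1) * (1 - 2 * exp (- ((max (d/a) 0)^2) / 2)))"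
    using AE_lborel_singleton[of 0]
  proof eventually_elim
    case (elim d)
    have nd: "normal_density 0 \<sigma> d = C * exp (- k1 * d^2)"
      unfolding normal_density_alt[OF s] C_def k1_def ..
    have ex: "exp (- k1 * d^2) * exp (- ((d/a)^2) / 2) = exp (- k2 * d^2)"
      unfolding k2_def k1_def by (simp add: exp_add[symmetric] field_simps power_divide)
    show ?case
    proof (cases "a > 0")
      case True
      then show ?thesis using elim ex unfolding nd sg_def P_def Q_def
        by (cases "d > 0") (auto simp: indicator_def max_def divide_le_0_iff algebra_simps)
    next
      case False
      then have "a < 0" using a by auto
      then show ?thesis using elim ex unfolding nd sg_def P_def Q_def
        by (cases "d > 0") (auto simp: indicator_def max_def divide_le_0_iff algebra_simps)
    qed
  qed
  moreover have "sg * (1 - 2 * (C * (sqrt pi / (2 * sqrt k1) + sqrt pi / (2 * sqrt k2)))) = - a / sqrt (a^2 + \<sigma>^2)"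
  proof -
    have sp: "sqrt pi > 0" by simp
    have C: "C = 1 / (sqrt 2 * sqrt pi * \<sigma>)"
      unfolding C_def using s by (simp add: real_sqrt_mult)
    have sk1: "sqrt k1 = 1 / (sqrt 2 * \<sigma>)"
      unfolding k1_def using s by (simp add: real_sqrt_mult real_sqrt_divide)
    have "k2 = (a^2 + \<sigma>^2) / (2 * \<sigma>^2 * a^2)"
      unfolding k2_def using s a by (simp add: field_simps)
    then have sk2: "sqrt k2 = sqrt (a^2 + \<sigma>^2) / (sqrt 2 * \<sigma> * \<bar>a\<bar>)"
      using s by (simp add: real_sqrt_mult real_sqrt_divide)
    have pos: "sqrt (a^2 + \<sigma>^2) > 0" using s by (simp add: add_nonneg_pos)
    have s2: "sqrt 2 > 0" by simp
    have "C * (sqrt pi / (2 * sqrt k1)) = 1/2"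
      unfolding C sk1 using s sp s2 by (simp add: field_simps)
    moreover have "2 * (C * (sqrt pi / (2 * sqrt k2))) = \<bar>a\<bar> / sqrt (a^2 + \<sigma>^2)"
      unfolding C sk2 using s sp s2 pos a by (simp add: field_simps)
    moreover have "C > 0" unfolding C_def using s by simp
    ultimately have "1 - 2 * (C * (sqrt pi / (2 * sqrt k1) + sqrt pi / (2 * sqrt k2))) = - \<bar>a\<bar> / sqrt (a^2 + \<sigma>^2)"
      by (simp add: algebra_simps)
    then show ?thesis unfolding sg_def by (auto simp: abs_if)
  qed
  ultimately show ?thesis
    using borel_measurable_has_bochner_integral[OF h1] has_bochner_integral_cong_AE[OF _ _ hAE]
    by auto
qed


lemma rayleigh_rho: "rayleigh_density = (\<lambda>s. ennreal (rho s))"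
  by (rule ext) (simp add: rayleigh_density_def rho_def)

lemma core_deg:
  assumes P: "prob_space M"
    and Rd: "distributed M lborel R rayleigh_density"
    and D0: "AE \<omega> in M. D \<omega> = 0"
    and Dm: "D \<in> borel_measurable M"
    and a: "a \<noteq> 0"
  shows "prob_space.expectation M (\<lambda>\<omega>. sgn0 (D \<omega> - a * R \<omega>)) = - a / sqrt (a^2 + 0^2)"
proof -
  interpret prob_space M by fact
  have Rd': "distributed M lborel R (\<lambda>s. ennreal (rho s))" using Rd by (simp add: rayleigh_rho)
  have "expectation (\<lambda>\<omega>. sgn0 (D \<omega> - a * R \<omega>)) = expectation (\<lambda>\<omega>. sgn0 (0 - a * R \<omega>))"
    using D0 distributed_measurable[OF Rd'] Dm by (intro integral_cong_AE) (auto intro: AE_mp)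
  also have "\<dots> = (\<integral>s. rho s * sgn0 (0 - a * s) \<partial>lborel)"
    by (rule distributed_integral[OF Rd', symmetric]) (auto simp: rho_nonneg)
  also have "\<dots> = (if a > 0 then 1 else -1) * (1 - 2 * exp (- ((max (0/a) 0)^2) / 2))"
    using inner[OF a, of 0] by (simp add: has_bochner_integral_iff)
  also have "\<dots> = - a / sqrt (a^2 + 0^2)"
    using a by (auto simp: abs_if)
  finally show ?thesis .
qed

lemma core:
  assumes P: "prob_space M"
    and Rd: "distributed M lborel R rayleigh_density"
    and Dd: "distributed M lborel D (normal_density 0 \<sigma>)"
    and s: "\<sigma> > 0"
    and ind: "prob_space.indep_var M lborel D lborel R"
  shows "prob_space.expectation M (\<lambda>\<omega>. sgn0 (D \<omega> - a * R \<omega>)) = - a / sqrt (a^2 + \<sigma>^2)"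
proof -
  interpret prob_space M by fact
  have Rd': "distributed M lborel R (\<lambda>s. ennreal (rho s))" using Rd by (simp add: rayleigh_rho)
  note [measurable] = distributed_measurable[OF Rd'] distributed_measurable[OF Dd]
  show ?thesis
  proof (cases "a = 0")
    case True
    have "expectation (\<lambda>\<omega>. sgn0 (D \<omega> - a * R \<omega>)) = expectation (\<lambda>\<omega>. sgn0 (D \<omega>))"
      using True by simp
    also have "\<dots> = (\<integral>d. normal_density 0 \<sigma> d * sgn0 d \<partial>lborel)"
      by (rule distributed_integral[OF Dd, symmetric]) auto
    also have "\<dots> = 0" using outer0[OF s] by (simp add: has_bochner_integral_iff)
    finally show ?thesis using True by simp
  next
    case a: False
    define P1 where "P1 = distr M lborel D"
    define P2 where "P2 = distr M lborel R"
    have P1d: "P1 = density lborel (\<lambda>x. ennreal (normal_density 0 \<sigma> x))"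
      unfolding P1_def by (rule distributed_distr_eq_density[OF Dd])
    have P2d: "P2 = density lborel (\<lambda>x. ennreal (rho x))"
      unfolding P2_def by (rule distributed_distr_eq_density[OF Rd'])
    interpret P1: prob_space P1 unfolding P1_def by (rule prob_space_distr) measurable
    interpret P2: prob_space P2 unfolding P2_def by (rule prob_space_distr) measurable
    interpret P12: pair_prob_space P1 P2 by unfold_locales
    have joint: "P1 \<Otimes>\<^sub>M P2 = distr M (lborel \<Otimes>\<^sub>M lborel) (\<lambda>\<omega>. (D \<omega>, R \<omega>))"
      using ind unfolding indep_var_distribution_eq P1_def P2_def by simp
    define f where "f = (\<lambda>z::real \<times> real. sgn0 (fst z - a * snd z))"
    have fm[measurable]: "f \<in> borel_measurable (lborel \<Otimes>\<^sub>M lborel)"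
      unfolding f_def by measurable
    have "expectation (\<lambda>\<omega>. sgn0 (D \<omega> - a * R \<omega>)) = integral\<^sup>L (distr M (lborel \<Otimes>\<^sub>M lborel) (\<lambda>\<omega>. (D \<omega>, R \<omega>))) f"
      by (subst integral_distr) (auto simp: f_def)
    also have "\<dots> = integral\<^sup>L (P1 \<Otimes>\<^sub>M P2) f" by (simp add: joint)
    also have "\<dots> = (\<integral>d. (\<integral>s. f (d, s) \<partial>P2) \<partial>P1)"
    proof (rule P12.integral_fst'[symmetric])
      have "prob_space (P1 \<Otimes>\<^sub>M P2)" by (rule prob_space_pair) unfold_locales
      then have fmP: "finite_measure (P1 \<Otimes>\<^sub>M P2)" by (simp add: prob_space_def)
      show "integrable (P1 \<Otimes>\<^sub>M P2) f"
        by (rule finite_measure.integrable_const_bound[OF fmP, where B=1]) (auto simp: f_def sgn0_def P1_def P2_def)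
    qed
    also have "\<dots> = (\<integral>d. (if a > 0 then 1 else -1) * (1 - 2 * exp (- ((max (d/a) 0)^2) / 2)) \<partial>P1)"
    proof (rule Bochner_Integration.integral_cong[OF refl])
      fix d
      have "(\<integral>s. f (d, s) \<partial>P2) = (\<integral>s. rho s * sgn0 (d - a * s) \<partial>lborel)"
        unfolding P2d by (subst integral_density) (auto simp: f_def rho_nonneg)
      also have "\<dots> = (if a > 0 then 1 else -1) * (1 - 2 * exp (- ((max (d/a) 0)^2) / 2))"
        using inner[OF a, of d] by (simp add: has_bochner_integral_iff)
      finally show "(\<integral>s. f (d, s) \<partial>P2) = (if a > 0 then 1 else -1) * (1 - 2 * exp (- ((max (d/a) 0)^2) / 2))" .
    qed
    also have "\<dots> = (\<integral>d. normal_density 0 \<sigma> d * ((if a > 0 then 1 else -1) * (1 - 2 * exp (- ((max (d/a) 0)^2) / 2))) \<partial>lborel)"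
      unfolding P1d by (subst integral_density) auto
    also have "\<dots> = - a / sqrt (a^2 + \<sigma>^2)"
      using outer[OF s a] by (simp add: has_bochner_integral_iff)
    finally show ?thesis .
  qed
qed


lemma (in prob_space) indep_set_swap_mono:
  assumes "indep_set A B" "C \<subseteq> B" "E \<subseteq> A"
  shows "indep_set C E"
proof -
  have h: "A \<subseteq> events" "B \<subseteq> events" "\<And>x y. x \<in> A \<Longrightarrow> y \<in> B \<Longrightarrow> prob (x \<inter> y) = prob x * prob y"
    using assms(1) unfolding indep_sets2_eq by auto
  show ?thesis unfolding indep_sets2_eq
  proof (intro conjI ballI)
    show "C \<subseteq> events" using h(2) assms(2) by (rule order_trans[rotated])
    show "E \<subseteq> events" using h(1) assms(3) by (rule order_trans[rotated])
    fix x y assume "x \<in> C" "y \<in> E"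
    then have "prob (y \<inter> x) = prob y * prob x" using assms(2,3) by (intro h(3)) auto
    then show "prob (x \<inter> y) = prob x * prob y" by (simp add: Int_commute mult.commute)
  qed
qed



theorem proposition2:
  fixes M :: "'a measure"
    and X :: "real \<Rightarrow> 'a \<Rightarrow> real"
    and r r1 r2 :: "real \<Rightarrow> real"
    and R :: "'a \<Rightarrow> real"
    and \<Delta> :: "real \<Rightarrow> 'a \<Rightarrow> real"
    and X0 :: "real \<Rightarrow> 'a \<Rightarrow> real"
    and t :: real
  assumes prob: "prob_space M"
    (* X: zero-mean stationary Gaussian process with covariance r *)
    and X_gauss: "gaussian_process M UNIV X"
    and X_mean: "\<And>s. prob_space.expectation M (X s) = 0"
    and X_cov: "\<And>s u. prob_space.expectation M (\<lambda>\<omega>. X s \<omega> * X (s + u) \<omega>) = r u"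
    (* r twice continuously differentiable, r''(0) < 0 *)
    and r_d1: "\<And>u. (r has_real_derivative r1 u) (at u)"
    and r_d2: "\<And>u. (r1 has_real_derivative r2 u) (at u)"
    and r2_cont: "continuous_on UNIV r2"
    and r2_neg: "r2 0 < 0"
    (* R standard Rayleigh *)
    and R_distr: "distributed M lborel R rayleigh_density"
    (* Delta: zero-mean Gaussian process on [0,\<infinity>) with the given covariance *)
    and D_gauss: "gaussian_process M {0..} \<Delta>"
    and D_mean: "\<And>s. s \<ge> 0 \<Longrightarrow> prob_space.expectation M (\<Delta> s) = 0"
    and D_cov: "\<And>s u. s \<ge> 0 \<Longrightarrow> u \<ge> 0 \<Longrightarrow>
        prob_space.expectation M (\<lambda>\<omega>. \<Delta> s \<omega> * \<Delta> u \<omega>)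
          = r (s - u) - r s * r u / r 0 + r1 s * r1 u / r2 0"
    (* R independent of the process Delta *)
    and indep: "prob_space.indep_set M
                  {R -` A \<inter> space M | A. A \<in> sets borel}
                  {(\<lambda>\<omega>. restrict (\<lambda>s. \<Delta> s \<omega>) {0..}) -` B \<inter> space M
                     | B. B \<in> sets (Pi\<^sub>M {0..} (\<lambda>_. borel :: real measure))}"
    (* Slepian model at level zero *)
    and X0_def: "\<And>s \<omega>. s \<ge> 0 \<Longrightarrow> X0 s \<omega> = - R \<omega> * r1 s / sqrt (- r2 0) + \<Delta> s \<omega>"
    and t_pos: "t > 0"
    and t_r: "\<bar>r t\<bar> < r 0"
  shows "prob_space.expectation M (\<lambda>\<omega>. sgn0 (X0 t \<omega>))
           = - sqrt (r 0 / - r2 0) * (r1 t / sqrt ((r 0)\<^sup>2 - (r t)\<^sup>2))"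
  proof -
  interpret prob_space M by (rule prob)
  define a where "a = r1 t / sqrt (- r2 0)"
  define v where "v = r (t - t) - r t * r t / r 0 + r1 t * r1 t / r2 0"
  have t0: "t \<in> {0..}" using t_pos by simp
  have r0: "r 0 > 0" using t_r by linarith
  have Dm[measurable]: "\<Delta> t \<in> borel_measurable M" using D_gauss[unfolded gaussian_process_def, THEN conjunct1] t0 by (rule bspec)
  have Dg: "gaussian_rv M (\<Delta> t)"
  proof -
    have "gaussian_rv M (\<lambda>\<omega>. \<Sum>s\<in>{t}. (\<lambda>_. 1) s * \<Delta> s \<omega>)"
      using D_gauss[unfolded gaussian_process_def, THEN conjunct2, rule_format, of "{t}" "\<lambda>_. 1"] t0 by simp
    then show ?thesis by simp
  qed
  have Ev: "expectation (\<lambda>\<omega>. \<Delta> t \<omega> * \<Delta> t \<omega>) = v"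
    unfolding v_def using D_cov[of t t] t_pos by simp
  have Em: "expectation (\<Delta> t) = 0" using D_mean t_pos by simp
  have Rm[measurable]: "R \<in> borel_measurable M" using distributed_measurable[OF R_distr] by simp
  have X0eq: "sgn0 (X0 t \<omega>) = sgn0 (\<Delta> t \<omega> - a * R \<omega>)" for \<omega>
  proof -
    have "X0 t \<omega> = - R \<omega> * r1 t / sqrt (- r2 0) + \<Delta> t \<omega>" using X0_def[of t \<omega>] t_pos by simp
    also have "\<dots> = \<Delta> t \<omega> - a * R \<omega>" unfolding a_def by (simp add: algebra_simps)
    finally show ?thesis by simp
  qed
  define F where "F = (\<lambda>\<omega>. restrict (\<lambda>s. \<Delta> s \<omega>) {0::real..})"
  define Rfam where "Rfam = {R -` A \<inter> space M | A. A \<in> sets (borel :: real measure)}"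
  define Dfam where "Dfam = {F -` B \<inter> space M | B. B \<in> sets (Pi\<^sub>M {0::real..} (\<lambda>_. borel :: real measure))}"
  have ind0: "indep_set Rfam Dfam" using indep unfolding Rfam_def Dfam_def F_def .
  have isR: "Int_stable Rfam" unfolding Int_stable_def Rfam_def
  proof (intro ballI)
    fix x y assume "x \<in> {R -` A \<inter> space M |A. A \<in> sets borel}" "y \<in> {R -` A \<inter> space M |A. A \<in> sets borel}"
    then obtain A B where "x = R -` A \<inter> space M" "A \<in> sets borel" "y = R -` B \<inter> space M" "B \<in> sets borel" by blast
    then show "x \<inter> y \<in> {R -` A \<inter> space M |A. A \<in> sets borel}"
      by (intro CollectI exI[of _ "A \<inter> B"]) auto
  qed
  have isD: "Int_stable Dfam" unfolding Int_stable_def Dfam_def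
  proof (intro ballI)
    fix x y assume "x \<in> {F -` B \<inter> space M |B. B \<in> sets (Pi\<^sub>M {0::real..} (\<lambda>_. borel :: real measure))}"
      "y \<in> {F -` B \<inter> space M |B. B \<in> sets (Pi\<^sub>M {0::real..} (\<lambda>_. borel :: real measure))}"
    then obtain A B where "x = F -` A \<inter> space M" "A \<in> sets (Pi\<^sub>M {0::real..} (\<lambda>_. borel :: real measure))"
      "y = F -` B \<inter> space M" "B \<in> sets (Pi\<^sub>M {0::real..} (\<lambda>_. borel :: real measure))" by blast
    then show "x \<inter> y \<in> {F -` B \<inter> space M |B. B \<in> sets (Pi\<^sub>M {0::real..} (\<lambda>_. borel :: real measure))}"
      by (intro CollectI exI[of _ "A \<inter> B"]) auto
  qed
  have ind1: "indep_set (sigma_sets (space M) Rfam) (sigma_sets (space M) Dfam)"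
    by (rule indep_set_sigma_sets[OF ind0 isR isD])
  have sub1: "{\<Delta> t -` A \<inter> space M | A. A \<in> sets lborel} \<subseteq> sigma_sets (space M) Dfam"
  proof
    fix x assume "x \<in> {\<Delta> t -` A \<inter> space M | A. A \<in> sets lborel}"
    then obtain A where x: "x = \<Delta> t -` A \<inter> space M" and A: "A \<in> sets borel" by auto
    define B where "B = (\<lambda>f. f t) -` A \<inter> space (Pi\<^sub>M {0::real..} (\<lambda>_. borel :: real measure))"
    have "B \<in> sets (Pi\<^sub>M {0::real..} (\<lambda>_. borel :: real measure))"
      unfolding B_def using measurable_component_singleton[OF t0, of "\<lambda>_. borel :: real measure"] A
      by (rule measurable_sets)
    moreover have "x = F -` B \<inter> space M"
      unfolding x B_def F_def using t0 by (auto simp: space_PiM)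
    ultimately have "x \<in> Dfam" unfolding Dfam_def by blast
    then show "x \<in> sigma_sets (space M) Dfam" by (rule sigma_sets.Basic)
  qed
  have sub2: "{R -` A \<inter> space M | A. A \<in> sets lborel} \<subseteq> sigma_sets (space M) Rfam"
    unfolding Rfam_def by (auto intro: sigma_sets.Basic)
  have indv: "indep_var lborel (\<Delta> t) lborel R"
    unfolding indep_var_eq
  proof (intro conjI)
    show "random_variable lborel (\<Delta> t)" "random_variable lborel R" by auto
    show "indep_set (sigma_sets (space M) {\<Delta> t -` A \<inter> space M |A. A \<in> sets lborel})
      (sigma_sets (space M) {R -` A \<inter> space M |A. A \<in> sets lborel})"
    proof (rule indep_set_swap_mono[OF ind1])
      show "sigma_sets (space M) {\<Delta> t -` A \<inter> space M |A. A \<in> sets lborel} \<subseteq> sigma_sets (space M) Dfam"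
        using sub1 by (rule sigma_sets_mono)
      show "sigma_sets (space M) {R -` A \<inter> space M |A. A \<in> sets lborel} \<subseteq> sigma_sets (space M) Rfam"
        using sub2 by (rule sigma_sets_mono)
    qed
  qed
  have rt2: "(r t)^2 < (r 0)^2" using t_r r0 by (simp add: abs_less_iff power2_eq_square) (smt (verit) mult_strict_mono' mult_minus_left mult_minus_right abs_less_iff mult_less_cancel_left_pos)
  have av: "a^2 + v = ((r 0)^2 - (r t)^2) / r 0"
    unfolding a_def v_def using r2_neg r0 by (simp add: power_divide field_simps power2_eq_square)
  have avpos: "a^2 + v > 0" unfolding av using rt2 r0 by simp
  have main: "expectation (\<lambda>\<omega>. sgn0 (X0 t \<omega>)) = - a / sqrt (a^2 + v)"
  proof -
    have "expectation (\<lambda>\<omega>. sgn0 (X0 t \<omega>)) = expectation (\<lambda>\<omega>. sgn0 (\<Delta> t \<omega> - a * R \<omega>))"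
      by (simp add: X0eq)
    moreover have "expectation (\<lambda>\<omega>. sgn0 (\<Delta> t \<omega> - a * R \<omega>)) = - a / sqrt (a^2 + v)"
    proof -
      from Dg have "(\<exists>\<mu> \<sigma>. \<sigma> > 0 \<and> distributed M lborel (\<Delta> t) (normal_density \<mu> \<sigma>)) \<or> (\<exists>c. AE \<omega> in M. \<Delta> t \<omega> = c)"
        unfolding gaussian_rv_def by blast
      then show ?thesis
      proof
        assume "\<exists>\<mu> \<sigma>. \<sigma> > 0 \<and> distributed M lborel (\<Delta> t) (normal_density \<mu> \<sigma>)"
        then obtain \<mu> \<sigma> where s: "\<sigma> > 0" and Dd: "distributed M lborel (\<Delta> t) (normal_density \<mu> \<sigma>)" by blast
        have "\<mu> = 0" using normal_distributed_expectation[OF s Dd] Em by simp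
        with Dd have Dd0: "distributed M lborel (\<Delta> t) (normal_density 0 \<sigma>)" by simp
        have "variance (\<Delta> t) = \<sigma>^2" by (rule normal_distributed_variance[OF s Dd0])
        then have "v = \<sigma>^2" using Ev Em by (simp add: power2_eq_square)
        then show ?thesis using core[OF prob R_distr Dd0 s indv, of a] by simp
      next
        assume "\<exists>c. AE \<omega> in M. \<Delta> t \<omega> = c"
        then obtain c where c: "AE \<omega> in M. \<Delta> t \<omega> = c" by blast
        have "expectation (\<Delta> t) = expectation (\<lambda>_. c)"
          using c by (intro integral_cong_AE) auto
        then have c0: "c = 0" using Em prob_space by simp
        have "expectation (\<lambda>\<omega>. \<Delta> t \<omega> * \<Delta> t \<omega>) = expectation (\<lambda>_. 0)"
          using c c0 by (intro integral_cong_AE) auto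
        then have v0: "v = 0" using Ev by simp
        then have "a \<noteq> 0" using avpos by auto
        then show ?thesis using core_deg[OF prob R_distr _ Dm, of a] c c0 v0 by simp
      qed
    qed
    ultimately show ?thesis by simp
  qed
  have sq: "sqrt (a^2 + v) = sqrt ((r 0)^2 - (r t)^2) / sqrt (r 0)"
    unfolding av by (simp add: real_sqrt_divide)
  have p1: "sqrt ((r 0)^2 - (r t)^2) > 0" using rt2 by simp
  have p2: "sqrt (r 0) > 0" "sqrt (- r2 0) > 0" using r0 r2_neg by auto
  have "- a / sqrt (a^2 + v) = - sqrt (r 0 / - r2 0) * (r1 t / sqrt ((r 0)\<^sup>2 - (r t)\<^sup>2))"
    unfolding sq unfolding a_def real_sqrt_divide using p1 p2 by (simp add: field_simps)
  then show ?thesis using main by simp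
qed

end
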